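(* If $T$ is a tree with $n$ vertices that contains a perfect matching and has maximum degree $\Delta(T)=3$, then $\nu_{2}(T) \geq \frac{3n-2}{4}$.
   Context: $\nu_2(T)$ is the maximum number of edges of a $2$-edge-colorable subgraph of $T$, i.e. the maximum total size of two edge-disjoint matchings of $T$. *)

theory Defs
  imports Complex_Main
begin

definition simple_graph :: "'a set \<Rightarrow> 'a set set \<Rightarrow> bool" where
  "simple_graph V E \<longleftrightarrow> finite V \<and> (\<forall>e\<in>E. e \<subseteq> V \<and> card e = 2)"

definition adjacent :: "'a set set \<Rightarrow> 'a \<Rightarrow> 'a \<Rightarrow> bool" where
  "adjacent E u v \<longleftrightarrow> {u, v} \<in> E"

definition connected_graph :: "'a set \<Rightarrow> 'a set set \<Rightarrow> bool" where
  "connected_graph V E \<longleftrightarrow> V \<noteq> {} \<and>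
     (\<forall>u\<in>V. \<forall>v\<in>V. (u, v) \<in> {(x, y). adjacent E x y}\<^sup>*)"

definition is_cycle :: "'a set set \<Rightarrow> 'a list \<Rightarrow> bool" where
  "is_cycle E cs \<longleftrightarrow> length cs \<ge> 3 \<and> distinct cs \<and>
     (\<forall>i. Suc i < length cs \<longrightarrow> adjacent E (cs ! i) (cs ! Suc i)) \<and>
     adjacent E (last cs) (hd cs)"

definition acyclic_graph :: "'a set set \<Rightarrow> bool" where
  "acyclic_graph E \<longleftrightarrow> \<not> (\<exists>cs. is_cycle E cs)"

definition is_tree :: "'a set \<Rightarrow> 'a set set \<Rightarrow> bool" where
  "is_tree V E \<longleftrightarrow> simple_graph V E \<and> connected_graph V E \<and> acyclic_graph E"

definition is_matching :: "'a set set \<Rightarrow> 'a set set \<Rightarrow> bool" where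
  "is_matching E M \<longleftrightarrow> M \<subseteq> E \<and> (\<forall>e1\<in>M. \<forall>e2\<in>M. e1 \<noteq> e2 \<longrightarrow> e1 \<inter> e2 = {})"

definition perfect_matching :: "'a set \<Rightarrow> 'a set set \<Rightarrow> 'a set set \<Rightarrow> bool" where
  "perfect_matching V E M \<longleftrightarrow> is_matching E M \<and> \<Union>M = V"

definition degree :: "'a set set \<Rightarrow> 'a \<Rightarrow> nat" where
  "degree E v = card {e \<in> E. v \<in> e}"

definition max_degree :: "'a set \<Rightarrow> 'a set set \<Rightarrow> nat" where
  "max_degree V E = Max (degree E ` V)"

definition nu2 :: "'a set set \<Rightarrow> nat" where
  "nu2 E = Max {card (M1 \<union> M2) | M1 M2.
      is_matching E M1 \<and> is_matching E M2 \<and> M1 \<inter> M2 = {}}"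

end

theory Submission
  imports Defs
begin

lemma leaf_exists:
  assumes fin: "finite F" and two: "\<forall>e\<in>F. card e = 2" and ne: "F \<noteq> {}"
    and acyc: "\<not> (\<exists>cs. is_cycle F cs)"
  shows "\<exists>x y. {x,y} \<in> F \<and> x \<noteq> y \<and> (\<forall>e\<in>F. x \<in> e \<longrightarrow> e = {x,y})"
proof -
  define U where "U = \<Union>F"
  have finU: "finite U" unfolding U_def using fin two
    by (metis card.infinite finite_Union zero_neq_numeral)
  define P where "P = {ps. distinct ps \<and> set ps \<subseteq> U \<and> length ps \<ge> 2 \<and>
      (\<forall>i. Suc i < length ps \<longrightarrow> adjacent F (ps!i) (ps!Suc i))}"
  obtain e0 where e0: "e0 \<in> F" using ne by blast
  then obtain a b where ab: "e0 = {a,b}" "a \<noteq> b" using two card_2_iff by metis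
  have "[a,b] \<in> P" using ab e0 unfolding P_def U_def adjacent_def by auto
  then have ex: "\<exists>ps\<in>P. length ps = 2" by (intro bexI[where x="[a,b]"]) simp_all
  have bnd: "\<forall>k. (\<exists>ps\<in>P. length ps = k) \<longrightarrow> k \<le> card U"
  proof (intro allI impI)
    fix k assume "\<exists>ps\<in>P. length ps = k"
    then obtain ps where "ps \<in> P" "length ps = k" by blast
    then show "k \<le> card U" unfolding P_def
      using finU by (metis (mono_tags, lifting) card_mono distinct_card mem_Collect_eq)
  qed
  obtain k where k: "\<exists>ps\<in>P. length ps = k" and kmax: "\<forall>k'. (\<exists>ps\<in>P. length ps = k') \<longrightarrow> k' \<le> k"
    using Nat.ex_has_greatest_nat[of "\<lambda>k. \<exists>ps\<in>P. length ps = k", OF ex bnd] by blast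
  obtain ps where ps: "ps \<in> P" "length ps = k" using k by blast
  have dps: "distinct ps" and sps: "set ps \<subseteq> U" and lps: "length ps \<ge> 2"
    and aps: "\<forall>i. Suc i < length ps \<longrightarrow> adjacent F (ps!i) (ps!Suc i)"
    using ps(1) unfolding P_def by auto
  obtain x y rest where xyr: "ps = x # y # rest" using lps
    by (metis One_nat_def Suc_1 Suc_le_length_iff)
  have xy: "{x,y} \<in> F" using aps[rule_format, of 0] xyr unfolding adjacent_def by simp
  have xney: "x \<noteq> y" using dps xyr by simp
  have "\<forall>e\<in>F. x \<in> e \<longrightarrow> e = {x,y}"
  proof (intro ballI impI)
    fix e assume eF: "e \<in> F" and xe: "x \<in> e"
    obtain z where ez: "e = {x,z}" "z \<noteq> x" using two eF xe card_2_iff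
      by (metis insert_commute insertE singletonD)
    show "e = {x,y}"
    proof (rule ccontr)
      assume "e \<noteq> {x,y}"
      then have zy: "z \<noteq> y" using ez by auto
      show False
      proof (cases "z \<in> set ps")
        case False
        have "z # ps \<in> P" unfolding P_def
        proof (intro CollectI conjI allI impI)
          show "distinct (z # ps)" using False dps by simp
          show "set (z # ps) \<subseteq> U" using sps eF ez unfolding U_def by auto
          show "2 \<le> length (z # ps)" using lps by simp
          fix i assume i: "Suc i < length (z # ps)"
          show "adjacent F ((z # ps) ! i) ((z # ps) ! Suc i)"
          proof (cases i)
            case 0
            then show ?thesis using xyr eF ez unfolding adjacent_def by (simp add: insert_commute)
          next
            case (Suc j)
            then show ?thesis using aps i by simp
          qed
        qed
        then have "Suc k \<le> k" using kmax ps(2) by (metis length_Cons)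
        then show False by simp
      next
        case True
        then obtain j where j: "j < length ps" "ps ! j = z" by (metis in_set_conv_nth)
        have j2: "j \<ge> 2" using j xyr ez(2) zy
          by (metis One_nat_def less_2_cases not_le nth_Cons_0 nth_Cons_Suc)
        define cs where "cs = take (Suc j) ps"
        have lcs: "length cs = Suc j" using j unfolding cs_def by simp
        have "is_cycle F cs" unfolding is_cycle_def
        proof (intro conjI allI impI)
          show "3 \<le> length cs" using lcs j2 by simp
          show "distinct cs" unfolding cs_def using dps by simp
          fix i assume "Suc i < length cs"
          then show "adjacent F (cs ! i) (cs ! Suc i)" using aps lcs j unfolding cs_def by simp
        next
          have "last cs = z" using lcs j unfolding cs_def by (subst last_conv_nth) auto
          moreover have "hd cs = x" unfolding cs_def using xyr by simp
          ultimately show "adjacent F (last cs) (hd cs)" using eF ez unfolding adjacent_def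
            by (simp add: insert_commute)
        qed
        then show False using acyc by blast
      qed
    qed
  qed
  then show ?thesis using xy xney by blast
qed


lemma cycle_mono: "is_cycle F cs \<Longrightarrow> F \<subseteq> G \<Longrightarrow> is_cycle G cs"
  unfolding is_cycle_def adjacent_def by blast

lemma forest_matching:
  assumes "finite F" "\<forall>e\<in>F. card e = 2" "\<not> (\<exists>cs. is_cycle F cs)"
    "\<forall>v. card {e\<in>F. v \<in> e} \<le> 2"
  shows "\<exists>Mt. is_matching F Mt \<and> card F \<le> 2 * card Mt"
  using assms
proof (induction "card F" arbitrary: F rule: less_induct)
  case less
  show ?case
  proof (cases "F = {}")
    case True
    then show ?thesis unfolding is_matching_def by auto
  next
    case False
    obtain x y where xy: "{x,y} \<in> F" "x \<noteq> y" and xl: "\<forall>e\<in>F. x \<in> e \<longrightarrow> e = {x,y}"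
      using leaf_exists[OF less.prems(1,2) False less.prems(3)] by blast
    define D where "D = {e\<in>F. y \<in> e}"
    define F' where "F' = F - D"
    have finD: "finite D" using less.prems(1) unfolding D_def by simp
    have cD: "card D \<le> 2" using spec[OF less.prems(4), of y] unfolding D_def by simp
    have xyD: "{x,y} \<in> D" using xy unfolding D_def by simp
    have DF: "D \<subseteq> F" unfolding D_def by auto
    have cF': "card F' = card F - card D" unfolding F'_def by (rule card_Diff_subset[OF finD DF])
    have cDpos: "card D \<ge> 1" using xyD finD by (metis One_nat_def Suc_leI card_gt_0_iff empty_iff)
    have cDF: "card D \<le> card F" by (rule card_mono[OF less.prems(1) DF])
    have lt: "card F' < card F" using cF' cDpos cDF by linarith
    have sub: "F' \<subseteq> F" unfolding F'_def by auto
    have "\<exists>Mt. is_matching F' Mt \<and> card F' \<le> 2 * card Mt"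
    proof (rule less.hyps[OF lt])
      show "finite F'" by (rule finite_subset[OF sub less.prems(1)])
      show "\<forall>e\<in>F'. card e = 2" using less.prems(2) sub by blast
      show "\<not> (\<exists>cs. is_cycle F' cs)" using less.prems(3) sub cycle_mono by blast
      show "\<forall>v. card {e\<in>F'. v \<in> e} \<le> 2"
      proof
        fix v
        have "card {e\<in>F'. v \<in> e} \<le> card {e\<in>F. v \<in> e}"
          using sub less.prems(1) by (intro card_mono) auto
        then show "card {e\<in>F'. v \<in> e} \<le> 2" using less.prems(4) by (meson order_trans)
      qed
    qed
    then obtain Mt' where m': "is_matching F' Mt'" "card F' \<le> 2 * card Mt'" by blast
    define Mt where "Mt = insert {x,y} Mt'"
    have Mt'F': "Mt' \<subseteq> F'" using m'(1) unfolding is_matching_def by auto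
    have finMt': "finite Mt'" using finite_subset[OF sub less.prems(1)] finite_subset[OF Mt'F'] by simp
    have notin: "{x,y} \<notin> Mt'" using Mt'F' xyD unfolding F'_def by auto
    have cMt: "card Mt = Suc (card Mt')" unfolding Mt_def using finMt' notin by simp
    have disj: "\<forall>e\<in>Mt'. {x,y} \<inter> e = {}"
    proof
      fix e assume "e \<in> Mt'"
      then have eF': "e \<in> F'" using Mt'F' by auto
      then have "y \<notin> e" unfolding F'_def D_def by auto
      moreover have "x \<notin> e" using eF' xl calculation unfolding F'_def by auto
      ultimately show "{x,y} \<inter> e = {}" by auto
    qed
    have "is_matching F Mt" unfolding is_matching_def Mt_def
    proof (intro conjI)
      show "insert {x, y} Mt' \<subseteq> F" using xy Mt'F' sub by auto
      show "\<forall>e1\<in>insert {x, y} Mt'. \<forall>e2\<in>insert {x, y} Mt'. e1 \<noteq> e2 \<longrightarrow> e1 \<inter> e2 = {}"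
        using disj m'(1) unfolding is_matching_def by (auto simp: Int_commute)
    qed
    moreover have "card F \<le> 2 * card Mt" using cMt m'(2) cF' cD cDF by linarith
    ultimately show ?thesis by blast
  qed
qed

lemma connected_card:
  assumes sg: "simple_graph V E" and conn: "connected_graph V E"
  shows "card V \<le> card E + 1"
proof -
  have finV: "finite V" using sg unfolding simple_graph_def by simp
  have EV: "E \<subseteq> Pow V" using sg unfolding simple_graph_def by auto
  have finE: "finite E" using EV finV by (meson finite_Pow_iff finite_subset)
  obtain r where r: "r \<in> V" using conn unfolding connected_graph_def by auto
  define R where "R = {(x, y). adjacent E x y}"
  define d where "d v = (LEAST k. (v, r) \<in> R ^^ k)" for v
  have reach: "\<exists>k. (v, r) \<in> R ^^ k" if "v \<in> V" for v
    using conn that r unfolding connected_graph_def R_def by (simp add: rtrancl_power)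
  have step: "\<exists>y. {v,y} \<in> E \<and> d y + 1 = d v" if v: "v \<in> V" "v \<noteq> r" for v
  proof -
    have dv: "(v, r) \<in> R ^^ d v" unfolding d_def using reach[OF v(1)] by (rule LeastI_ex)
    have "d v \<noteq> 0" using dv v(2) by (metis relpow_0_E)
    then obtain m where m: "d v = Suc m" by (cases "d v") auto
    obtain y where y: "(v, y) \<in> R" "(y, r) \<in> R ^^ m" using relpow_Suc_D2[of v r m R] dv m by auto
    have "d y \<le> m" unfolding d_def using y(2) by (rule Least_le)
    moreover have "(y, r) \<in> R ^^ d y" unfolding d_def using y(2) by (rule LeastI)
    then have "(v, r) \<in> R ^^ Suc (d y)" using y(1) by (rule relpow_Suc_I2[rotated])
    then have "d v \<le> Suc (d y)" unfolding d_def by (rule Least_le)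
    ultimately have "d y + 1 = d v" using m by simp
    moreover have "{v,y} \<in> E" using y(1) unfolding R_def adjacent_def by simp
    ultimately show ?thesis by blast
  qed
  define f where "f v = {v, SOME y. {v,y} \<in> E \<and> d y + 1 = d v}" for v
  have fprop: "f v \<in> E \<and> (\<exists>y. f v = {v,y} \<and> d y + 1 = d v)" if "v \<in> V - {r}" for v
  proof -
    let ?y = "SOME y. {v,y} \<in> E \<and> d y + 1 = d v"
    have "\<exists>y. {v,y} \<in> E \<and> d y + 1 = d v" using step[of v] that by blast
    then have "{v,?y} \<in> E \<and> d ?y + 1 = d v" by (rule someI_ex)
    then show ?thesis unfolding f_def by blast
  qed
  have inj: "inj_on f (V - {r})"
  proof (rule inj_onI)
    fix v w assume v: "v \<in> V - {r}" and w: "w \<in> V - {r}" and eq: "f v = f w"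
    obtain y where y: "f v = {v,y}" "d y + 1 = d v" using fprop[OF v] by blast
    obtain z where z: "f w = {w,z}" "d z + 1 = d w" using fprop[OF w] by blast
    show "v = w"
    proof (rule ccontr)
      assume "v \<noteq> w"
      have "{v,y} = {w,z}" using eq y(1) z(1) by simp
      then have "v = z \<and> w = y" using \<open>v \<noteq> w\<close> unfolding doubleton_eq_iff by blast
      then show False using y(2) z(2) by simp
    qed
  qed
  have "f ` (V - {r}) \<subseteq> E" using fprop by auto
  then have "card (V - {r}) \<le> card E" by (rule card_inj_on_le[OF inj _ finE])
  then show ?thesis using r finV by simp
qed


theorem corollary2:
  fixes V :: "'a set" and E :: "'a set set"
  assumes "is_tree V E"
    and "\<exists>M. perfect_matching V E M"
    and "max_degree V E = 3"
  shows "real (nu2 E) \<ge> (3 * real (card V) - 2) / 4"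
proof -
  have sg: "simple_graph V E" and conn: "connected_graph V E" and acyc: "acyclic_graph E"
    using assms(1) unfolding is_tree_def by auto
  have finV: "finite V" using sg unfolding simple_graph_def by simp
  have EV: "E \<subseteq> Pow V" using sg unfolding simple_graph_def by auto
  have finE: "finite E" using EV finV by (meson finite_Pow_iff finite_subset)
  have two: "\<forall>e\<in>E. card e = 2" using sg unfolding simple_graph_def by auto
  obtain M where pm: "perfect_matching V E M" using assms(2) by blast
  have ME: "M \<subseteq> E" and dis: "\<forall>e1\<in>M. \<forall>e2\<in>M. e1 \<noteq> e2 \<longrightarrow> e1 \<inter> e2 = {}"
    and UM: "\<Union>M = V" using pm unfolding perfect_matching_def is_matching_def by auto
  have finM: "finite M" by (rule finite_subset[OF ME finE])
  have "card V = sum card M" unfolding UM[symmetric]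
  proof (rule card_Union_disjoint)
    show "pairwise disjnt M" using dis unfolding pairwise_def disjnt_def by blast
    fix A assume "A \<in> M" then show "finite A" using ME two by (metis card.infinite zero_neq_numeral subsetD)
  qed
  also have "\<dots> = sum (\<lambda>_. 2) M" using ME two by (intro sum.cong) auto
  finally have cardV: "card V = 2 * card M" by simp
  have cardE: "card V \<le> card E + 1" by (rule connected_card[OF sg conn])
  define F where "F = E - M"
  have cardF: "card F = card E - card M" unfolding F_def by (rule card_Diff_subset[OF finM ME])
  have FE: "F \<subseteq> E" unfolding F_def by auto
  have degF: "\<forall>v. card {e\<in>F. v \<in> e} \<le> 2"
  proof
    fix v
    show "card {e\<in>F. v \<in> e} \<le> 2"
    proof (cases "v \<in> V")
      case True
      have "degree E v \<le> Max (degree E ` V)" using finV True by (intro Max_ge) auto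
      then have d3: "card {e\<in>E. v \<in> e} \<le> 3" using assms(3) unfolding max_degree_def degree_def by simp
      obtain m where m: "m \<in> M" "v \<in> m" using UM True by blast
      have "{e\<in>F. v \<in> e} \<subseteq> {e\<in>E. v \<in> e} - {m}" unfolding F_def using m by auto
      then have "card {e\<in>F. v \<in> e} \<le> card ({e\<in>E. v \<in> e} - {m})"
        using finE by (intro card_mono) auto
      also have "\<dots> = card {e\<in>E. v \<in> e} - 1" using m ME finE by (subst card_Diff_singleton) auto
      finally show ?thesis using d3 by linarith
    next
      case False
      then have "{e\<in>F. v \<in> e} = {}" using FE EV by auto
      then show ?thesis by (simp only: card.empty)
    qed
  qed
  have acF: "\<not> (\<exists>cs. is_cycle F cs)" using acyc FE cycle_mono unfolding acyclic_graph_def by blast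
  obtain Mt where mt: "is_matching F Mt" "card F \<le> 2 * card Mt"
    using forest_matching[OF finite_subset[OF FE finE] _ acF degF] two FE by blast
  have MtF: "Mt \<subseteq> F" using mt(1) unfolding is_matching_def by auto
  have mE: "is_matching E Mt" using mt(1) FE unfolding is_matching_def by blast
  have mM: "is_matching E M" using pm unfolding perfect_matching_def by simp
  have disj: "M \<inter> Mt = {}" using MtF unfolding F_def by auto
  have finMt: "finite Mt" using finite_subset[OF MtF finite_subset[OF FE finE]] .
  have cU: "card (M \<union> Mt) = card M + card Mt" using finM finMt disj by (rule card_Un_disjoint)
  let ?S = "{card (M1 \<union> M2) | M1 M2. is_matching E M1 \<and> is_matching E M2 \<and> M1 \<inter> M2 = {}}"
  have finS: "finite ?S"
  proof (rule finite_subset[of _ "{..card E}"])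
    show "?S \<subseteq> {..card E}"
    proof
      fix k assume "k \<in> ?S"
      then obtain M1 M2 where "k = card (M1 \<union> M2)" "is_matching E M1" "is_matching E M2" by blast
      then show "k \<in> {..card E}" using finE unfolding is_matching_def
        by (simp add: card_mono)
    qed
  qed simp
  have "card (M \<union> Mt) \<in> ?S" using mM mE disj by blast
  then have "card (M \<union> Mt) \<le> nu2 E" unfolding nu2_def using finS by (intro Max_ge) auto
  then have "3 * card V \<le> 4 * nu2 E + 2" using cU cardV cardE cardF mt(2) by linarith
  then have "3 * real (card V) \<le> 4 * real (nu2 E) + 2" by linarith
  then show ?thesis by simp
qed

end
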